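(* Let $m\le n$ and $1\le k\le m$. Suppose $X = X^*$ is a nonzero $k$-block positive operator on $\mathcal{H}_n\otimes\mathcal{H}_m$, with maximal eigenvalue $\lambda_{max}$ and minimal eigenvalue $\lambda_{min}$. Then \[ \frac{\lambda_{min}}{\lambda_{max}} \ge 1 - \frac{m}{k}. \]
   Context: $\mathcal{H}_d=\mathbb{C}^d$ and $m\le n$. The Schmidt rank $SR(|v\rangle)$ of $|v\rangle\in\mathcal{H}_n\otimes\mathcal{H}_m$ is the rank of its coefficient matrix. A Hermitian $X$ is $k$-block positive if $\langle v|X|v\rangle\ge0$ for all $|v\rangle$ with $SR(|v\rangle)\le k$. Equivalently, the map associated to $X$ via the Choi–Jamiołkowski isomorphism is $k$-positive. *)

theory Defs
  imports "Jordan_Normal_Form.Schur_Decomposition" "Jordan_Normal_Form.DL_Rank"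
begin

text \<open>A vector v in C^n (x) C^m is a vector of length n*m; basis index of e_i (x) f_j is i*m + j.
  Its coefficient matrix is the n x m matrix with entries v_(i*m+j).\<close>
definition coeff_mat :: "nat \<Rightarrow> nat \<Rightarrow> complex vec \<Rightarrow> complex mat" where
  "coeff_mat n m v = mat n m (\<lambda>(i,j). v $ (i * m + j))"

definition schmidt_rank :: "nat \<Rightarrow> nat \<Rightarrow> complex vec \<Rightarrow> nat" where
  "schmidt_rank n m v = vec_space.rank n (coeff_mat n m v)"

definition hermitian :: "complex mat \<Rightarrow> bool" where
  "hermitian X \<longleftrightarrow> mat_adjoint X = X"

definition k_block_positive :: "nat \<Rightarrow> nat \<Rightarrow> nat \<Rightarrow> complex mat \<Rightarrow> bool" where
  "k_block_positive n m k X \<longleftrightarrow> hermitian X \<and>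
     (\<forall>v \<in> carrier_vec (n * m). schmidt_rank n m v \<le> k \<longrightarrow> Re ((X *\<^sub>v v) \<bullet>c v) \<ge> 0)"

text \<open>For a Hermitian matrix all eigenvalues are real.\<close>
definition lambda_max :: "complex mat \<Rightarrow> real" where
  "lambda_max X = Max {r :: real. eigenvalue X (complex_of_real r)}"

definition lambda_min :: "complex mat \<Rightarrow> real" where
  "lambda_min X = Min {r :: real. eigenvalue X (complex_of_real r)}"

end

theory Submission imports Defs "Jordan_Normal_Form.Spectral_Radius" begin


lemma cprod_sum: "dim_vec y = N \<Longrightarrow> x \<bullet>c y = (\<Sum>i<N. x$i * cnj (y$i))"
  unfolding scalar_prod_def by (auto simp: atLeast0LessThan)

lemma mv_sum: "A \<in> carrier_mat N M \<Longrightarrow> i < N \<Longrightarrow> dim_vec u = M \<Longrightarrow> (A *\<^sub>v u) $ i = (\<Sum>j<M. A$$(i,j) * u$j)"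
  by (auto simp: scalar_prod_def atLeast0LessThan)

lemma herm_entry: assumes "hermitian A" "A \<in> carrier_mat N N" "i < N" "j < N"
  shows "A $$ (i,j) = cnj (A $$ (j,i))"
proof -
  have "A $$ (i,j) = mat_adjoint A $$ (i,j)" using assms(1) unfolding hermitian_def by simp
  also have "\<dots> = cnj (A $$ (j,i))" using assms(2-) unfolding mat_adjoint_def mat_of_rows_def
    by auto
  finally show ?thesis .
qed

lemma herm_intro: assumes "A \<in> carrier_mat N N" "\<And>i j. i < N \<Longrightarrow> j < N \<Longrightarrow> A $$ (i,j) = cnj (A $$ (j,i))"
  shows "hermitian A"
  unfolding hermitian_def
proof (rule eq_matI)
  fix i j assume "i < dim_row A" "j < dim_col A"
  then show "mat_adjoint A $$ (i,j) = A $$ (i,j)" using assms(1) assms(2)[of i j]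
    by (simp add: mat_adjoint_def mat_of_rows_def)
qed (use assms(1) in \<open>auto simp: mat_adjoint_def mat_of_rows_def\<close>)

lemma qf_sum: assumes "A \<in> carrier_mat N N" "x \<in> carrier_vec N" "y \<in> carrier_vec N"
  shows "(A *\<^sub>v x) \<bullet>c y = (\<Sum>p<N. \<Sum>q<N. A$$(p,q) * x$q * cnj (y$p))"
proof -
  have "(A *\<^sub>v x) \<bullet>c y = (\<Sum>p<N. (A *\<^sub>v x) $ p * cnj (y$p))" using assms by (intro cprod_sum) auto
  also have "\<dots> = (\<Sum>p<N. (\<Sum>q<N. A$$(p,q) * x$q) * cnj (y$p))"
    using assms by (intro sum.cong refl, subst mv_sum[of _ N N], auto)
  finally show ?thesis by (simp add: sum_distrib_right)
qed

lemma herm_swap: assumes "hermitian A" "A \<in> carrier_mat N N" "x \<in> carrier_vec N" "y \<in> carrier_vec N"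
  shows "cnj ((A *\<^sub>v x) \<bullet>c y) = (A *\<^sub>v y) \<bullet>c x"
proof -
  have "cnj ((A *\<^sub>v x) \<bullet>c y) = (\<Sum>p<N. \<Sum>q<N. cnj (A$$(p,q)) * cnj (x$q) * y$p)"
    unfolding qf_sum[OF assms(2-4)] by simp
  also have "\<dots> = (\<Sum>p<N. \<Sum>q<N. A$$(q,p) * y$p * cnj (x$q))"
  proof -
    have h: "\<And>p q. p<N \<Longrightarrow> q<N \<Longrightarrow> cnj (A$$(p,q)) = A$$(q,p)"
      using herm_entry[OF assms(1,2)] by (metis complex_cnj_cnj)
    show ?thesis by (intro sum.cong refl) (simp add: h mult_ac)
  qed
  also have "\<dots> = (\<Sum>q<N. \<Sum>p<N. A$$(q,p) * y$p * cnj (x$q))" by (rule sum.swap)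
  also have "\<dots> = (A *\<^sub>v y) \<bullet>c x" unfolding qf_sum[OF assms(2,4,3)] ..
  finally show ?thesis .
qed

definition adjm :: "complex mat \<Rightarrow> complex mat" where
  "adjm W = mat (dim_col W) (dim_row W) (\<lambda>(i,p). cnj (W $$ (p,i)))"

lemma adjm_carrier: "W \<in> carrier_mat N N \<Longrightarrow> adjm W \<in> carrier_mat N N"
  unfolding adjm_def by auto

lemma adjm_swap: assumes "W \<in> carrier_mat N N" "a \<in> carrier_vec N" "y \<in> carrier_vec N"
  shows "a \<bullet>c (W *\<^sub>v y) = (adjm W *\<^sub>v a) \<bullet>c y"
proof -
  have "a \<bullet>c (W *\<^sub>v y) = (\<Sum>p<N. a$p * cnj ((W *\<^sub>v y) $ p))" using assms by (intro cprod_sum) auto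
  also have "\<dots> = (\<Sum>p<N. \<Sum>q<N. a$p * cnj (W$$(p,q)) * cnj (y$q))"
  proof (rule sum.cong[OF refl])
    fix p assume "p \<in> {..<N}"
    then have "(W *\<^sub>v y) $ p = (\<Sum>q<N. W$$(p,q) * y$q)" using assms by (intro mv_sum[of _ N N]) auto
    then show "a$p * cnj ((W *\<^sub>v y) $ p) = (\<Sum>q<N. a$p * cnj (W$$(p,q)) * cnj (y$q))"
      by (simp add: sum_distrib_left mult.assoc)
  qed
  also have "\<dots> = (\<Sum>q<N. \<Sum>p<N. a$p * cnj (W$$(p,q)) * cnj (y$q))" by (rule sum.swap)
  also have "\<dots> = (\<Sum>q<N. (adjm W *\<^sub>v a) $ q * cnj (y$q))"
  proof (rule sum.cong[OF refl])
    fix q assume q: "q \<in> {..<N}"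
    then have "(adjm W *\<^sub>v a) $ q = (\<Sum>p<N. adjm W $$ (q,p) * a$p)" using assms
      by (intro mv_sum[of _ N N]) (auto simp: adjm_carrier)
    also have "\<dots> = (\<Sum>p<N. cnj (W$$(p,q)) * a$p)" using q assms
      by (intro sum.cong refl) (auto simp: adjm_def)
    finally show "(\<Sum>p<N. a$p * cnj (W$$(p,q)) * cnj (y$q)) = (adjm W *\<^sub>v a) $ q * cnj (y$q)"
      by (simp add: sum_distrib_right sum_distrib_left mult_ac)
  qed
  also have "\<dots> = (adjm W *\<^sub>v a) \<bullet>c y" using assms by (intro cprod_sum[symmetric]) auto
  finally show ?thesis .
qed

lemma cprod_real: assumes "x \<in> carrier_vec N" shows "x \<bullet>c x = complex_of_real (Re (x \<bullet>c x))" "Re (x \<bullet>c x) \<ge> 0"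
proof -
  have "x \<bullet>c x \<ge> 0" by (rule conjugate_square_ge_0_vec)
  then show "x \<bullet>c x = complex_of_real (Re (x \<bullet>c x))" "Re (x \<bullet>c x) \<ge> 0"
    by (auto simp: less_eq_complex_def complex_eq_iff)
qed



lemma cprod_smult: assumes "x \<in> carrier_vec N" "y \<in> carrier_vec N"
  shows "(a \<cdot>\<^sub>v x) \<bullet>c (b \<cdot>\<^sub>v y) = a * cnj b * (x \<bullet>c y)"
  using assms by (simp add: conjugate_smult_vec mult.assoc)

lemma adjm_mv_index: assumes "W \<in> carrier_mat N N" "a \<in> carrier_vec N" "i < N"
  shows "(adjm W *\<^sub>v a) $ i = a \<bullet>c col W i"
proof -
  have "(adjm W *\<^sub>v a) $ i = (\<Sum>p<N. adjm W $$ (i,p) * a$p)"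
    using assms by (intro mv_sum[of _ N N]) (auto simp: adjm_carrier)
  also have "\<dots> = (\<Sum>p<N. a$p * cnj (col W i $ p))"
    using assms by (intro sum.cong refl) (auto simp: adjm_def)
  also have "\<dots> = a \<bullet>c col W i" using assms by (intro cprod_sum[symmetric]) auto
  finally show ?thesis .
qed

lemma nr_norm: assumes "x \<in> carrier_vec N" "x \<bullet>c x \<noteq> 0"
  shows "complex_of_real (1 / sqrt (Re (x \<bullet>c x))) * cnj (complex_of_real (1 / sqrt (Re (x \<bullet>c x)))) * (x \<bullet>c x) = 1"
proof -
  define r where "r = Re (x \<bullet>c x)"
  have xr: "x \<bullet>c x = complex_of_real r" unfolding r_def by (rule cprod_real(1)[OF assms(1)])
  have "r \<ge> 0" unfolding r_def by (rule cprod_real(2)[OF assms(1)])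
  with assms(2) xr have "r > 0" by auto
  then have s: "sqrt r * sqrt r = r" by simp
  have "1 / sqrt r * (1 / sqrt r) * r = r / (sqrt r * sqrt r)" by simp
  also have "\<dots> = 1" using s \<open>r > 0\<close> by simp
  finally have h1: "1 / sqrt r * (1 / sqrt r) * r = 1" .
  have h2: "complex_of_real (1/sqrt r) * cnj (complex_of_real (1/sqrt r)) * complex_of_real r
     = complex_of_real (1 / sqrt r * (1 / sqrt r) * r)" by (simp only: of_real_mult complex_cnj_complex_of_real)
  have "complex_of_real (1/sqrt r) * cnj (complex_of_real (1/sqrt r)) * complex_of_real r = 1"
    using h2[unfolded h1 of_real_1] .
  then show ?thesis unfolding xr(1) Re_complex_of_real .
qed



lemma rayleigh:
  assumes "A \<in> carrier_mat N N" "hermitian A" "\<And>r. eigenvalue A (complex_of_real r) \<Longrightarrow> r \<le> M"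
    "u \<in> carrier_vec N"
  shows "Re ((A *\<^sub>v u) \<bullet>c u) \<le> M * Re (u \<bullet>c u)"
  using assms
proof (induction N arbitrary: A u)
  case 0
  have "(A *\<^sub>v u) \<bullet>c u = 0" "u \<bullet>c u = 0" using cprod_sum[of u 0] 0 by auto
  then show ?case by simp
next
  case (Suc N)
  let ?n = "Suc N"
  have A: "A \<in> carrier_mat ?n ?n" and herm: "hermitian A" and u: "u \<in> carrier_vec ?n" using Suc.prems by auto
  from spectrum_non_empty[OF A] obtain e where "eigenvalue A e" unfolding spectrum_def by auto
  then obtain v where v: "v \<in> carrier_vec ?n" "v \<noteq> 0\<^sub>v ?n" "A *\<^sub>v v = e \<cdot>\<^sub>v v"
    unfolding eigenvalue_def eigenvector_def using A by auto
  have vv: "v \<bullet>c v \<noteq> 0" using v by simp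
  have q1: "(A *\<^sub>v v) \<bullet>c v = e * (v \<bullet>c v)" using v by simp
  have q2: "cnj ((A *\<^sub>v v) \<bullet>c v) = (A *\<^sub>v v) \<bullet>c v" using herm_swap[OF herm A v(1) v(1)] .
  have vr: "cnj (v \<bullet>c v) = v \<bullet>c v" using cprod_real[OF v(1)] by (metis complex_cnj_complex_of_real)
  have "cnj e * (v \<bullet>c v) = e * (v \<bullet>c v)" using q1 q2 vr by (metis complex_cnj_mult)
  then have "cnj e = e" using vv by simp
  then have "Im (cnj e) = Im e" by simp
  then have "Im e = 0" by simp
  then have ee: "e = complex_of_real (Re e)" by (simp add: complex_eq_iff)
  define er where "er = Re e"
  have e2: "complex_of_real er = e" unfolding er_def by (rule ee[symmetric])
  have eM: "er \<le> M" using Suc.prems(3)[of er] \<open>eigenvalue A e\<close> unfolding e2 by simp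
  interpret cof_vec_space ?n "TYPE(complex)" .
  note bc = basis_completion[OF v(1) v(2)]
  define ws where "ws = gram_schmidt ?n (basis_completion v)"
  note gs = gram_schmidt_result[OF bc(2) bc(4) bc(5) ws_def]
  have lws: "length ws = ?n" using gs(4) bc(6) by simp
  have bcv: "basis_completion v = v # tl (basis_completion v)" using bc(6,7)
    by (metis hd_Cons_tl list.size(3) nat.distinct(1))
  have ws0: "ws ! 0 = v"
  proof -
    have "hd ws = v" unfolding ws_def by (subst bcv) (rule gram_schmidt_hd[OF v(1)])
    then show ?thesis using lws by (metis hd_conv_nth list.size(3) nat.distinct(1))
  qed
  have wsc: "\<And>i. i < ?n \<Longrightarrow> ws ! i \<in> carrier_vec ?n" using gs(3) lws by auto
  have wso: "\<And>i j. i < ?n \<Longrightarrow> j < ?n \<Longrightarrow> (ws ! i \<bullet>c ws ! j = 0) = (i \<noteq> j)"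
    using gs(2) lws unfolding corthogonal_def by auto
  define nr where "nr = (\<lambda>w :: complex vec. complex_of_real (1 / sqrt (Re (w \<bullet>c w))))"
  define us where "us = map (\<lambda>w. nr w \<cdot>\<^sub>v w) ws"
  have lus: "length us = ?n" unfolding us_def using lws by simp
  have usi: "\<And>i. i < ?n \<Longrightarrow> us ! i = nr (ws ! i) \<cdot>\<^sub>v ws ! i" unfolding us_def using lws by simp
  have usc: "\<And>i. i < ?n \<Longrightarrow> us ! i \<in> carrier_vec ?n" using usi wsc by simp
  have uso: "\<And>i j. i < ?n \<Longrightarrow> j < ?n \<Longrightarrow> us ! i \<bullet>c us ! j = (if i = j then 1 else 0)"
  proof -
    fix i j assume ij: "i < ?n" "j < ?n"
    have "us ! i \<bullet>c us ! j = nr (ws ! i) * cnj (nr (ws ! j)) * (ws ! i \<bullet>c ws ! j)"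
      unfolding usi[OF ij(1)] usi[OF ij(2)] by (rule cprod_smult[OF wsc[OF ij(1)] wsc[OF ij(2)]])
    then show "us ! i \<bullet>c us ! j = (if i = j then 1 else 0)"
      using wso[OF ij] nr_norm[OF wsc[OF ij(1)]] unfolding nr_def by auto
  qed
  define W where "W = mat_of_cols ?n us"
  have W: "W \<in> carrier_mat ?n ?n" unfolding W_def using lus by (metis mat_of_cols_carrier(1))
  have colW: "\<And>j. j < ?n \<Longrightarrow> col W j = us ! j" unfolding W_def using lus usc by simp
  have adW: "adjm W \<in> carrier_mat ?n ?n" using adjm_carrier[OF W] .
  have WW: "adjm W * W = 1\<^sub>m ?n"
  proof (rule eq_matI)
    fix i j assume ij: "i < dim_row (1\<^sub>m ?n)" "j < dim_col (1\<^sub>m ?n)"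
    then have "(adjm W * W) $$ (i,j) = (adjm W *\<^sub>v col W j) $ i" using W adW by simp
    also have "\<dots> = col W j \<bullet>c col W i" using ij by (intro adjm_mv_index[OF W]) (auto simp: W)
    also have "\<dots> = 1\<^sub>m ?n $$ (i,j)" using ij colW uso by auto
    finally show "(adjm W * W) $$ (i,j) = 1\<^sub>m ?n $$ (i,j)" .
  qed (use W adW in auto)
  have WW': "W * adjm W = 1\<^sub>m ?n" using mat_mult_left_right_inverse[OF adW W WW] .
  define C where "C = adjm W * (A * W)"
  have C: "C \<in> carrier_mat ?n ?n" unfolding C_def using adW A W by auto
  have AW: "A * W \<in> carrier_mat ?n ?n" using A W by simp
  have Cv: "C *\<^sub>v z = adjm W *\<^sub>v (A *\<^sub>v (W *\<^sub>v z))" if z: "z \<in> carrier_vec ?n" for z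
  proof -
    have "C *\<^sub>v z = adjm W *\<^sub>v ((A * W) *\<^sub>v z)" unfolding C_def by (rule assoc_mult_mat_vec[OF adW AW z])
    also have "(A*W) *\<^sub>v z = A *\<^sub>v (W *\<^sub>v z)" by (rule assoc_mult_mat_vec[OF A W z])
    finally show ?thesis .
  qed
  have Ce: "\<And>i j. i < ?n \<Longrightarrow> j < ?n \<Longrightarrow> C $$ (i,j) = (A *\<^sub>v us ! j) \<bullet>c us ! i"
  proof -
    fix i j assume ij: "i < ?n" "j < ?n"
    have "C $$ (i,j) = (adjm W *\<^sub>v col (A * W) j) $ i" unfolding C_def using ij adW A W by simp
    also have "col (A * W) j = A *\<^sub>v us ! j" using col_mult2[OF A W ij(2)] colW[OF ij(2)] by simp
    also have "(adjm W *\<^sub>v (A *\<^sub>v us ! j)) $ i = (A *\<^sub>v us ! j) \<bullet>c col W i"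
      using ij A usc by (intro adjm_mv_index[OF W]) auto
    finally show "C $$ (i,j) = (A *\<^sub>v us ! j) \<bullet>c us ! i" using colW ij by simp
  qed
  have Ch: "\<And>i j. i < ?n \<Longrightarrow> j < ?n \<Longrightarrow> C $$ (i,j) = cnj (C $$ (j,i))"
    using Ce herm_swap[OF herm A] usc by simp
  have Au0: "A *\<^sub>v us ! 0 = e \<cdot>\<^sub>v us ! 0"
    using usi[of 0] ws0 v mult_mat_vec[OF A v(1)] by (simp add: smult_smult_assoc mult.commute)
  have Ccol: "\<And>i. i < ?n \<Longrightarrow> C $$ (i,0) = (if i = 0 then e else 0)"
    using Ce Au0 uso usc by (simp add: cprod_smult[of _ ?n _ _ 1, simplified])
  have Crow: "C $$ (0,j) = (if j = 0 then e else 0)" if j: "j < ?n" for j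
  proof -
    have "C$$(0,j) = cnj (C$$(j,0))" by (rule Ch) (use j in auto)
    also have "\<dots> = (if j=0 then e else 0)" using Ccol[OF j] \<open>cnj e = e\<close> by simp
    finally show ?thesis .
  qed
  define C3 where "C3 = mat N N (\<lambda>(i,j). C $$ (Suc i, Suc j))"
  have C3: "C3 \<in> carrier_mat N N" unfolding C3_def by simp
  have C3h: "hermitian C3"
  proof (rule herm_intro[OF C3])
    fix i j assume ij: "i < N" "j < N"
    have "C $$ (Suc i, Suc j) = cnj (C $$ (Suc j, Suc i))" by (rule Ch) (use ij in auto)
    then show "C3 $$ (i,j) = cnj (C3 $$ (j,i))" using ij by (simp add: C3_def)
  qed
  have C3ev: "r \<le> M" if ev: "eigenvalue C3 (complex_of_real r)" for r
  proof -
    from ev obtain y where y: "y \<in> carrier_vec N" "y \<noteq> 0\<^sub>v N" "C3 *\<^sub>v y = complex_of_real r \<cdot>\<^sub>v y"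
      unfolding eigenvalue_def eigenvector_def using C3 by auto
    define z where "z = vec ?n (\<lambda>i. if i = 0 then 0 else y $ (i - 1))"
    have z: "z \<in> carrier_vec ?n" unfolding z_def by simp
    have Cz: "C *\<^sub>v z = complex_of_real r \<cdot>\<^sub>v z"
    proof (rule eq_vecI)
      fix p assume "p < dim_vec (complex_of_real r \<cdot>\<^sub>v z)"
      then have p: "p < ?n" using z by simp
      have "(C *\<^sub>v z) $ p = (\<Sum>q<?n. C$$(p,q) * z$q)" using C p z by (intro mv_sum) auto
      also have "\<dots> = (\<Sum>q<N. C$$(p,Suc q) * y$q)"
        by (subst sum.lessThan_Suc_shift) (simp add: z_def)
      also have "\<dots> = (complex_of_real r \<cdot>\<^sub>v z) $ p"
      proof (cases p)
        case 0
        then show ?thesis using Crow z by (simp add: z_def)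
      next
        case (Suc p')
        then have p': "p' < N" using p by simp
        have "(\<Sum>q<N. C$$(p,Suc q) * y$q) = (C3 *\<^sub>v y) $ p'"
          using C3 y p' by (subst mv_sum[of _ N N]) (auto simp: C3_def Suc)
        also have "\<dots> = complex_of_real r * y $ p'" using y p' by simp
        finally show ?thesis using Suc p z by (simp add: z_def)
      qed
      finally show "(C *\<^sub>v z) $ p = (complex_of_real r \<cdot>\<^sub>v z) $ p" .
    qed (use C z in simp)
    define x where "x = W *\<^sub>v z"
    have x: "x \<in> carrier_vec ?n" unfolding x_def using W z by simp
    have "A *\<^sub>v x = (W * adjm W) *\<^sub>v (A *\<^sub>v x)" using WW' A x by simp
    also have "\<dots> = W *\<^sub>v (C *\<^sub>v z)" unfolding Cv[OF z] x_def using W adW A z by simp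
    also have "\<dots> = complex_of_real r \<cdot>\<^sub>v x" unfolding Cz x_def using mult_mat_vec[OF W z] .
    finally have Ax: "A *\<^sub>v x = complex_of_real r \<cdot>\<^sub>v x" .
    have "z \<noteq> 0\<^sub>v ?n"
    proof
      assume "z = 0\<^sub>v ?n"
      have yi: "y $ i = 0" if i: "i < N" for i
      proof -
        have "z $ Suc i = y $ i" using i unfolding z_def by simp
        moreover have "z $ Suc i = 0" using \<open>z = 0\<^sub>v ?n\<close> i by simp
        ultimately show ?thesis by simp
      qed
      have "y = 0\<^sub>v N" using y(1) yi by (intro eq_vecI) auto
      then show False using y(2) by simp
    qed
    then have "z \<bullet>c z \<noteq> 0" using z by simp
    moreover have "x \<bullet>c x = z \<bullet>c z"
    proof -
      have "(adjm W * W) *\<^sub>v z = adjm W *\<^sub>v (W *\<^sub>v z)" by (rule assoc_mult_mat_vec[OF adW W z])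
      then have zz: "adjm W *\<^sub>v (W *\<^sub>v z) = z" using WW z by simp
      have "x \<bullet>c x = (adjm W *\<^sub>v x) \<bullet>c z" unfolding x_def by (rule adjm_swap[OF W _ z]) (use W z in simp)
      then show ?thesis unfolding x_def zz .
    qed
    ultimately have "x \<noteq> 0\<^sub>v ?n" using x by auto
    then have "eigenvalue A (complex_of_real r)" unfolding eigenvalue_def eigenvector_def using x Ax A by auto
    then show "r \<le> M" by (rule Suc.prems(3))
  qed
  have IH: "\<And>y'. y' \<in> carrier_vec N \<Longrightarrow> Re ((C3 *\<^sub>v y') \<bullet>c y') \<le> M * Re (y' \<bullet>c y')"
    using Suc.IH[OF C3 C3h C3ev] by blast
  define y where "y = adjm W *\<^sub>v u"
  have y: "y \<in> carrier_vec ?n" unfolding y_def using adW u by simp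
  have "W *\<^sub>v y = (W * adjm W) *\<^sub>v u" unfolding y_def using W adW u by simp
  also have "\<dots> = u" using WW' u by simp
  finally have uy: "u = W *\<^sub>v y" by simp
  have Wy: "W *\<^sub>v y \<in> carrier_vec ?n" using W y by simp
  have "(A *\<^sub>v u) \<bullet>c u = (A *\<^sub>v (W *\<^sub>v y)) \<bullet>c (W *\<^sub>v y)" unfolding uy ..
  also have "\<dots> = (adjm W *\<^sub>v (A *\<^sub>v (W *\<^sub>v y))) \<bullet>c y" by (rule adjm_swap[OF W _ y]) (use A Wy in simp)
  also have "\<dots> = (C *\<^sub>v y) \<bullet>c y" unfolding Cv[OF y] ..
  finally have q: "(A *\<^sub>v u) \<bullet>c u = (C *\<^sub>v y) \<bullet>c y" .
  have "u \<bullet>c u = (W *\<^sub>v y) \<bullet>c (W *\<^sub>v y)" unfolding uy ..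
  also have "\<dots> = (adjm W *\<^sub>v (W *\<^sub>v y)) \<bullet>c y" by (rule adjm_swap[OF W Wy y])
  also have "(adjm W *\<^sub>v (W *\<^sub>v y)) \<bullet>c y = y \<bullet>c y"
  proof -
    have "(adjm W * W) *\<^sub>v y = adjm W *\<^sub>v (W *\<^sub>v y)" by (rule assoc_mult_mat_vec[OF adW W y])
    then have "adjm W *\<^sub>v (W *\<^sub>v y) = y" using WW y by simp
    then show ?thesis by simp
  qed
  finally have nn: "u \<bullet>c u = y \<bullet>c y" .
  define y' where "y' = vec N (\<lambda>i. y $ Suc i)"
  have y': "y' \<in> carrier_vec N" unfolding y'_def by simp
  have "(C *\<^sub>v y) \<bullet>c y = (\<Sum>p<?n. \<Sum>q<?n. C$$(p,q) * y$q * cnj (y$p))" by (rule qf_sum[OF C y y])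
  also have "\<dots> = e * (y$0 * cnj (y$0)) + (\<Sum>p<N. \<Sum>q<N. C$$(Suc p,Suc q) * y$Suc q * cnj (y$Suc p))"
    by (simp add: sum.lessThan_Suc_shift Crow Ccol del: sum.lessThan_Suc)
  also have "(\<Sum>p<N. \<Sum>q<N. C$$(Suc p,Suc q) * y$Suc q * cnj (y$Suc p)) = (C3 *\<^sub>v y') \<bullet>c y'"
    unfolding qf_sum[OF C3 y' y'] by (intro sum.cong refl) (simp add: C3_def y'_def)
  finally have q2: "(C *\<^sub>v y) \<bullet>c y = e * (y$0 * cnj (y$0)) + (C3 *\<^sub>v y') \<bullet>c y'" .
  have "y \<bullet>c y = (\<Sum>p<?n. y$p * cnj (y$p))" using y by (intro cprod_sum) auto
  also have "\<dots> = y$0 * cnj (y$0) + (\<Sum>p<N. y$Suc p * cnj (y$Suc p))"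
    by (simp add: sum.lessThan_Suc_shift del: sum.lessThan_Suc)
  also have "(\<Sum>p<N. y$Suc p * cnj (y$Suc p)) = y' \<bullet>c y'"
    using y' by (subst cprod_sum[of _ N]) (auto simp: y'_def)
  finally have n2: "y \<bullet>c y = y$0 * cnj (y$0) + y' \<bullet>c y'" .
  define t where "t = Re (y$0 * cnj (y$0))"
  have t: "t \<ge> 0" unfolding t_def by simp
  have "Re (e * (y$0 * cnj (y$0))) = er * t" unfolding t_def e2[symmetric] by simp
  then have "Re ((A *\<^sub>v u) \<bullet>c u) = er * t + Re ((C3 *\<^sub>v y') \<bullet>c y')" unfolding q q2 by simp
  also have "\<dots> \<le> M * t + M * Re (y' \<bullet>c y')" using IH[OF y'] eM t by (intro add_mono mult_right_mono) auto
  also have "\<dots> = M * Re (u \<bullet>c u)" unfolding nn n2 t_def by (simp add: algebra_simps)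
  finally show ?case .
qed


lemma herm_eig_real: assumes A: "A \<in> carrier_mat N N" and herm: "hermitian A" and ev: "eigenvalue A e"
  shows "e = complex_of_real (Re e)"
proof -
  from ev obtain v where v: "v \<in> carrier_vec N" "v \<noteq> 0\<^sub>v N" "A *\<^sub>v v = e \<cdot>\<^sub>v v"
    unfolding eigenvalue_def eigenvector_def using A by auto
  have vv: "v \<bullet>c v \<noteq> 0" using v by simp
  have q1: "(A *\<^sub>v v) \<bullet>c v = e * (v \<bullet>c v)" using v by simp
  have q2: "cnj ((A *\<^sub>v v) \<bullet>c v) = (A *\<^sub>v v) \<bullet>c v" using herm_swap[OF herm A v(1) v(1)] .
  have vr: "cnj (v \<bullet>c v) = v \<bullet>c v" using cprod_real[OF v(1)] by (metis complex_cnj_complex_of_real)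
  have "cnj e * (v \<bullet>c v) = e * (v \<bullet>c v)" using q1 q2 vr by (metis complex_cnj_mult)
  then have "cnj e = e" using vv by simp
  then have "Im (cnj e) = Im e" by simp
  then have "Im e = 0" by simp
  then show ?thesis by (simp add: complex_eq_iff)
qed

lemma rank_cols:
  fixes B :: "complex mat"
  assumes "finite S" "B \<in> carrier_mat n m" "\<And>i c. i < n \<Longrightarrow> c < m \<Longrightarrow> c \<notin> S \<Longrightarrow> B $$ (i,c) = 0"
  shows "vec_space.rank n B \<le> card S"
  using assms
proof (induction S arbitrary: B rule: finite_induct)
  case empty
  interpret vec_space "TYPE(complex)" n .
  have "B = 0\<^sub>m n m" using empty by (intro eq_matI) auto
  then show ?case using rank_0I by simp
next
  case (insert c S)
  interpret vec_space "TYPE(complex)" n .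
  define B1 where "B1 = mat n m (\<lambda>(i,c'). if c' = c then B $$ (i,c') else 0)"
  define B2 where "B2 = mat n m (\<lambda>(i,c'). if c' = c then 0 else B $$ (i,c'))"
  have B12: "B = B1 + B2" using insert.prems by (intro eq_matI) (auto simp: B1_def B2_def)
  have r1: "rank B1 \<le> 1"
    by (rule rank_le_1_product_entries[of B1 m "\<lambda>i. B $$ (i,c)" "\<lambda>c'. if c' = c then 1 else 0"])
      (auto simp: B1_def)
  have r2: "rank B2 \<le> card S"
    by (rule insert.IH) (use insert.prems in \<open>auto simp: B2_def\<close>)
  have "rank B \<le> rank B1 + rank B2" unfolding B12 by (rule rank_subadditive) (auto simp: B1_def B2_def)
  then show ?case using r1 r2 insert.hyps by simp
qed

lemma mod_inv: fixes x c m :: nat assumes "x < m" "c < m" shows "(c + m - (c + m - x) mod m) mod m = x"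
proof -
  define s where "s = c + m - x"
  have le: "s mod m \<le> s" by simp
  have d: "s - s mod m = m * (s div m)" by (simp add: minus_mod_eq_mult_div)
  have "c + m - s mod m = x + (s - s mod m)" using le assms unfolding s_def by linarith
  then have "c + m - s mod m = x + m * (s div m)" using d by simp
  then show ?thesis unfolding s_def[symmetric] using assms by simp
qed

lemma win_card: fixes c m k :: nat assumes "c < m" "k \<le> m"
  shows "card {j \<in> {..<m}. (c + m - j) mod m < k} = k"
proof -
  have m0: "m > 0" using assms by simp
  define L where "L = {j \<in> {..<m}. (c + m - j) mod m < k}"
  define R where "R = (\<lambda>t. (c + m - t) mod m) ` {..<k}"
  have s1: "L \<subseteq> R"
  proof
    fix j assume "j \<in> L"
    then have j: "j < m" "(c + m - j) mod m < k" unfolding L_def by auto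
    then have "j = (c + m - (c + m - j) mod m) mod m" using mod_inv[OF j(1) assms(1)] by simp
    then show "j \<in> R" unfolding R_def using j(2) by blast
  qed
  have s2: "R \<subseteq> L"
  proof
    fix j assume "j \<in> R"
    then obtain t where t: "t < k" "j = (c + m - t) mod m" unfolding R_def by auto
    have "(c + m - j) mod m = t" using t mod_inv[of t m c] assms by simp
    then show "j \<in> L" unfolding L_def using t m0 by simp
  qed
  have "{j \<in> {..<m}. (c + m - j) mod m < k} = (\<lambda>t. (c + m - t) mod m) ` {..<k}"
    using s1 s2 unfolding L_def R_def by (rule subset_antisym)
  moreover have "inj_on (\<lambda>t. (c + m - t) mod m) {..<k}"
  proof (rule inj_onI)
    fix t1 t2 assume t: "t1 \<in> {..<k}" "t2 \<in> {..<k}" "(c + m - t1) mod m = (c + m - t2) mod m"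
    have "t1 = (c + m - (c + m - t1) mod m) mod m" using mod_inv[of t1 m c] t assms by simp
    also have "\<dots> = (c + m - (c + m - t2) mod m) mod m" using t(3) by simp
    also have "\<dots> = t2" using mod_inv[of t2 m c] t assms by simp
    finally show "t1 = t2" .
  qed
  ultimately show ?thesis by (simp add: card_image)
qed

lemma win_card_le: fixes j m k :: nat assumes "j < m"
  shows "card {c \<in> {..<m}. (c + m - j) mod m < k} \<le> k"
proof -
  have "{c \<in> {..<m}. (c + m - j) mod m < k} \<subseteq> (\<lambda>t. (j + t) mod m) ` {..<k}"
  proof
    fix c assume "c \<in> {c \<in> {..<m}. (c + m - j) mod m < k}"
    then have c: "c < m" "(c + m - j) mod m < k" by auto
    have "(j + (c + m - j) mod m) mod m = (j + (c + m - j)) mod m" by (simp add: mod_add_right_eq)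
    also have "j + (c + m - j) = c + m" using assms by simp
    also have "(c + m) mod m = c" using c by simp
    finally show "c \<in> (\<lambda>t. (j + t) mod m) ` {..<k}" using c(2) by force
  qed
  then have "card {c \<in> {..<m}. (c + m - j) mod m < k} \<le> card ((\<lambda>t. (j + t) mod m) ` {..<k})"
    by (intro card_mono) auto
  also have "\<dots> \<le> k" using card_image_le[of "{..<k}" "\<lambda>t. (j + t) mod m"] by simp
  finally show ?thesis .
qed

definition DF :: "nat \<Rightarrow> (nat \<Rightarrow> nat \<Rightarrow> complex) \<Rightarrow> (nat \<Rightarrow> complex) \<Rightarrow> (nat \<Rightarrow> complex) \<Rightarrow> complex" where
  "DF N K a b = (\<Sum>p<N. \<Sum>q<N. K p q * a q * cnj (b p))"

lemma DF_diff: "DF N K (\<lambda>q. a q - b q) (\<lambda>q. a q - b q) = DF N K a a - DF N K a b - DF N K b a + DF N K b b"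
proof -
  have e: "\<And>p q. K p q * (a q - b q) * cnj (a p - b p) = K p q * a q * cnj (a p) - K p q * a q * cnj (b p)
     - K p q * b q * cnj (a p) + K p q * b q * cnj (b p)" by (simp add: algebra_simps)
  show ?thesis unfolding DF_def by (simp only: e sum.distrib sum_subtractf)
qed

lemma sum4_swap: "(\<Sum>p<N. \<Sum>q<N. \<Sum>j<M. \<Sum>l<M. X p q j l) = (\<Sum>j<M. \<Sum>l<M. \<Sum>p<N. \<Sum>q<N. X p q j l :: complex)"
proof -
  have "(\<Sum>p<N. \<Sum>q<N. \<Sum>j<M. \<Sum>l<M. X p q j l) = (\<Sum>p<N. \<Sum>j<M. \<Sum>q<N. \<Sum>l<M. X p q j l)"
    by (rule sum.cong[OF refl], rule sum.swap)
  also have "\<dots> = (\<Sum>p<N. \<Sum>j<M. \<Sum>l<M. \<Sum>q<N. X p q j l)"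
    by (rule sum.cong[OF refl], rule sum.cong[OF refl], rule sum.swap)
  also have "\<dots> = (\<Sum>j<M. \<Sum>p<N. \<Sum>l<M. \<Sum>q<N. X p q j l)" by (rule sum.swap)
  also have "\<dots> = (\<Sum>j<M. \<Sum>l<M. \<Sum>p<N. \<Sum>q<N. X p q j l)" by (rule sum.cong[OF refl], rule sum.swap)
  finally show ?thesis .
qed

lemma DF_sum: "DF N K (\<lambda>q. \<Sum>j<M. f j q) (\<lambda>p. \<Sum>l<M. g l p) = (\<Sum>j<M. \<Sum>l<M. DF N K (f j) (g l))"
proof -
  have "DF N K (\<lambda>q. \<Sum>j<M. f j q) (\<lambda>p. \<Sum>l<M. g l p) = (\<Sum>p<N. \<Sum>q<N. \<Sum>l<M. \<Sum>j<M. K p q * f j q * cnj (g l p))"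
    unfolding DF_def by (simp add: sum_distrib_left sum_distrib_right mult.assoc)
  also have "\<dots> = (\<Sum>l<M. \<Sum>j<M. \<Sum>p<N. \<Sum>q<N. K p q * f j q * cnj (g l p))" by (rule sum4_swap)
  also have "\<dots> = (\<Sum>j<M. \<Sum>l<M. \<Sum>p<N. \<Sum>q<N. K p q * f j q * cnj (g l p))" by (rule sum.swap)
  also have "\<dots> = (\<Sum>j<M. \<Sum>l<M. DF N K (f j) (g l))" unfolding DF_def ..
  finally show ?thesis .
qed

lemma DF_scale: "DF N K (\<lambda>q. c * a q) (\<lambda>p. c * a p) = c * cnj c * DF N K a a"
  unfolding DF_def by (simp add: sum_distrib_left mult_ac)

lemma DF_X: assumes X: "X \<in> carrier_mat N N"
  shows "DF N (\<lambda>p q. (if p = q then complex_of_real lm else 0) - X $$ (p,q)) f f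
     = complex_of_real lm * (vec N f \<bullet>c vec N f) - (X *\<^sub>v vec N f) \<bullet>c vec N f"
proof -
  have e: "\<And>p q. ((if p = q then complex_of_real lm else 0) - X $$ (p,q)) * f q * cnj (f p)
      = (if q = p then complex_of_real lm * f p * cnj (f p) else 0) - X $$ (p,q) * f q * cnj (f p)"
    by (simp add: algebra_simps)
  have "DF N (\<lambda>p q. (if p = q then complex_of_real lm else 0) - X $$ (p,q)) f f
     = (\<Sum>p<N. complex_of_real lm * f p * cnj (f p)) - (\<Sum>p<N. \<Sum>q<N. X $$ (p,q) * f q * cnj (f p))"
    unfolding DF_def by (simp only: e sum_subtractf sum.delta' finite_lessThan) (simp add: sum_subtractf)
  also have "(\<Sum>p<N. complex_of_real lm * f p * cnj (f p)) = complex_of_real lm * (vec N f \<bullet>c vec N f)"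
    by (subst cprod_sum[of _ N]) (auto simp: sum_distrib_left mult.assoc)
  also have "(\<Sum>p<N. \<Sum>q<N. X $$ (p,q) * f q * cnj (f p)) = (X *\<^sub>v vec N f) \<bullet>c vec N f"
    by (subst qf_sum[OF X]) auto
  finally show ?thesis .
qed

lemma sum_if_const: assumes "finite A"
  shows "(\<Sum>j\<in>A. if P j then (a::complex) else 0) = of_nat (card {j \<in> A. P j}) * a"
proof -
  have "(\<Sum>j\<in>A. if P j then a else 0) = (\<Sum>j\<in>{j \<in> A. P j}. a)" by (rule sym, rule sum.inter_filter[OF assms])
  also have "\<dots> = of_nat (card {j \<in> A. P j}) * a" by (rule sum_constant)
  finally show ?thesis .
qed

lemma idx_lt: fixes i c n m :: nat assumes "i < n" "c < m" shows "i * m + c < n * m"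
proof -
  have "i * m + c < Suc i * m" using assms by simp
  also have "\<dots> \<le> n * m" using assms by (intro mult_le_mono1) simp
  finally show ?thesis .
qed


theorem corollary5p5:
  fixes n m k :: nat and X :: "complex mat"
  assumes "m \<le> n" and "1 \<le> k" and "k \<le> m"
    and "X \<in> carrier_mat (n * m) (n * m)"
    and "hermitian X"
    and "X \<noteq> 0\<^sub>m (n * m) (n * m)"
    and "k_block_positive n m k X"
  shows "lambda_min X / lambda_max X \<ge> 1 - real m / real k"
proof -
  define N where "N = n * m"
  have m0: "m > 0" and k0: "k > 0" and n0: "n > 0" using assms(1-3) by auto
  have N0: "N > 0" unfolding N_def using m0 n0 by simp
  have X: "X \<in> carrier_mat N N" using assms(4) unfolding N_def .
  have herm: "hermitian X" by (rule assms(5))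
  define E where "E = {r::real. eigenvalue X (complex_of_real r)}"
  have "complex_of_real ` E \<subseteq> spectrum X" unfolding E_def spectrum_def by auto
  then have "finite (complex_of_real ` E)" using card_finite_spectrum(1)[OF X] finite_subset by blast
  moreover have "inj_on complex_of_real E" by (auto simp: inj_on_def)
  ultimately have finE: "finite E" using finite_imageD by blast
  from spectrum_non_empty[OF X N0] obtain e where ev: "eigenvalue X e" unfolding spectrum_def by auto
  have ee: "e = complex_of_real (Re e)" by (rule herm_eig_real[OF X herm ev])
  have "eigenvalue X (complex_of_real (Re e))" using ev ee by metis
  then have "Re e \<in> E" unfolding E_def by simp
  then have neE: "E \<noteq> {}" by auto
  define lm where "lm = Max E"
  define ln where "ln = Min E"
  have lmE: "lm \<in> E" unfolding lm_def using finE neE by simp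
  have lnE: "ln \<in> E" unfolding ln_def using finE neE by simp
  have lnlm: "ln \<le> lm" unfolding ln_def lm_def using finE neE by simp
  have lam: "lambda_max X = lm" "lambda_min X = ln"
    unfolding lambda_max_def lambda_min_def lm_def ln_def E_def by simp_all
  have ray: "Re ((X *\<^sub>v u) \<bullet>c u) \<le> lm * Re (u \<bullet>c u)" if u: "u \<in> carrier_vec N" for u
    by (rule rayleigh[OF X herm _ u]) (use finE in \<open>auto simp: lm_def E_def\<close>)
  have key: "real k * (lm - ln) \<le> real m * lm"
  proof -
    from lnE obtain v where v: "v \<in> carrier_vec N" "v \<noteq> 0\<^sub>v N" "X *\<^sub>v v = complex_of_real ln \<cdot>\<^sub>v v"
      unfolding E_def eigenvalue_def eigenvector_def using X by auto
    define nv where "nv = Re (v \<bullet>c v)"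
    have vv: "v \<bullet>c v = complex_of_real nv" unfolding nv_def by (rule cprod_real(1)[OF v(1)])
    have "v \<bullet>c v \<noteq> 0" using v by simp
    then have "nv \<noteq> 0" using vv by auto
    moreover have "nv \<ge> 0" unfolding nv_def by (rule cprod_real(2)[OF v(1)])
    ultimately have nv0: "nv > 0" by simp
    define K where "K = (\<lambda>p q. (if p = q then complex_of_real lm else 0) - X $$ (p,q))"
    define Q where "Q = (\<lambda>f. DF N K f f)"
    have Qv: "Q f = complex_of_real lm * (vec N f \<bullet>c vec N f) - (X *\<^sub>v vec N f) \<bullet>c vec N f" for f
      unfolding Q_def K_def by (rule DF_X[OF X])
    have Qnn: "Re (Q f) \<ge> 0" for f
      using ray[of "vec N f"] unfolding Qv by simp
    define vf where "vf = (\<lambda>p. v $ p)"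
    have vfv: "vec N vf = v" unfolding vf_def using v(1) by (intro eq_vecI) auto
    have Qvf: "Q vf = complex_of_real (lm - ln) * complex_of_real nv"
      unfolding Qv vfv using v vv by (simp add: algebra_simps)
    define win where "win = (\<lambda>j p. (p mod m + m - j) mod m < k)"
    define wf where "wf = (\<lambda>j p. if win j p then v $ p else 0)"
    have cardw: "card {j \<in> {..<m}. win j p} = k" for p
      unfolding win_def by (rule win_card) (use m0 assms(3) in auto)
    have sumw: "(\<Sum>j<m. wf j p) = of_nat k * vf p" for p
    proof -
      have "(\<Sum>j<m. wf j p) = of_nat (card {j \<in> {..<m}. win j p}) * vf p"
        unfolding wf_def vf_def by (rule sum_if_const) simp
      then show ?thesis by (simp only: cardw)
    qed
    have blk: "Re (Q (wf j)) \<le> lm * Re (vec N (wf j) \<bullet>c vec N (wf j))" if j: "j < m" for j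
    proof -
      define w where "w = vec N (wf j)"
      have w: "w \<in> carrier_vec (n * m)" unfolding w_def N_def by simp
      define S where "S = {c \<in> {..<m}. (c + m - j) mod m < k}"
      have "schmidt_rank n m w \<le> card S"
        unfolding schmidt_rank_def
      proof (rule rank_cols)
        show "finite S" unfolding S_def by simp
        show "coeff_mat n m w \<in> carrier_mat n m" unfolding coeff_mat_def by simp
        fix i c assume ic: "i < n" "c < m" "c \<notin> S"
        have lt: "i * m + c < N" unfolding N_def by (rule idx_lt[OF ic(1,2)])
        have "(i * m + c) mod m = c" using ic(2) by simp
        then have "\<not> win j (i * m + c)" using ic unfolding win_def S_def by auto
        then show "coeff_mat n m w $$ (i, c) = 0" using ic lt unfolding coeff_mat_def w_def wf_def by simp
      qed
      also have "card S \<le> k" unfolding S_def by (rule win_card_le[OF j])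
      finally have "schmidt_rank n m w \<le> k" .
      then have "Re ((X *\<^sub>v w) \<bullet>c w) \<ge> 0" using assms(7) w unfolding k_block_positive_def by blast
      then show ?thesis unfolding Qv w_def[symmetric] by simp
    qed
    have sumG: "(\<Sum>j<m. vec N (wf j) \<bullet>c vec N (wf j)) = of_nat k * (v \<bullet>c v)"
    proof -
      have "(\<Sum>j<m. vec N (wf j) \<bullet>c vec N (wf j)) = (\<Sum>j<m. \<Sum>p<N. wf j p * cnj (wf j p))"
        by (intro sum.cong refl, subst cprod_sum[of _ N]) auto
      also have "\<dots> = (\<Sum>p<N. \<Sum>j<m. wf j p * cnj (wf j p))" by (rule sum.swap)
      also have "\<dots> = (\<Sum>p<N. of_nat k * (v $ p * cnj (v $ p)))"
      proof (rule sum.cong[OF refl])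
        fix p
        have "(\<Sum>j<m. wf j p * cnj (wf j p)) = (\<Sum>j<m. if win j p then v $ p * cnj (v $ p) else 0)"
          unfolding wf_def by (intro sum.cong refl) auto
        also have "\<dots> = of_nat (card {j \<in> {..<m}. win j p}) * (v $ p * cnj (v $ p))"
          by (rule sum_if_const) simp
        also have "\<dots> = of_nat k * (v $ p * cnj (v $ p))" by (simp only: cardw)
        finally show "(\<Sum>j<m. wf j p * cnj (wf j p)) = of_nat k * (v $ p * cnj (v $ p))" .
      qed
      also have "\<dots> = of_nat k * (v \<bullet>c v)" using v(1) by (subst cprod_sum[of _ N]) (auto simp: sum_distrib_left)
      finally show ?thesis .
    qed
    define T where "T = (\<Sum>j<m. Q (wf j))"
    define P where "P = (\<Sum>j<m. \<Sum>l<m. DF N K (wf j) (wf l))"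
    have P: "P = complex_of_nat (k * k) * Q vf"
    proof -
      have "P = DF N K (\<lambda>q. \<Sum>j<m. wf j q) (\<lambda>p. \<Sum>l<m. wf l p)" unfolding P_def by (rule DF_sum[symmetric])
      also have "\<dots> = DF N K (\<lambda>q. of_nat k * vf q) (\<lambda>p. of_nat k * vf p)" unfolding sumw ..
      also have "\<dots> = of_nat k * cnj (of_nat k) * Q vf" unfolding Q_def by (rule DF_scale)
      finally show ?thesis by simp
    qed
    define S1 where "S1 = (\<Sum>j<m. \<Sum>l<m. Q (\<lambda>q. wf j q - wf l q))"
    have S1: "S1 = of_nat m * T + of_nat m * T - P - P"
    proof -
      have "S1 = (\<Sum>j<m. \<Sum>l<m. Q (wf j) - DF N K (wf j) (wf l) - DF N K (wf l) (wf j) + Q (wf l))"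
        unfolding S1_def Q_def DF_diff ..
      also have "\<dots> = (\<Sum>j<m. \<Sum>l<m. Q (wf j)) - P - (\<Sum>j<m. \<Sum>l<m. DF N K (wf l) (wf j)) + (\<Sum>j<m. \<Sum>l<m. Q (wf l))"
        unfolding P_def by (simp only: sum.distrib sum_subtractf)
      also have "(\<Sum>j<m. \<Sum>l<m. DF N K (wf l) (wf j)) = P" unfolding P_def by (rule sum.swap)
      also have "(\<Sum>j<m. \<Sum>l<m. Q (wf j)) = of_nat m * T" unfolding T_def by (simp add: sum_distrib_left)
      also have "(\<Sum>j<m. \<Sum>l<m. Q (wf l)) = of_nat m * T" unfolding T_def by simp
      finally show ?thesis by simp
    qed
    have "Re S1 \<ge> 0" unfolding S1_def by (simp add: Re_sum Qnn sum_nonneg)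
    then have "2 * Re P \<le> 2 * real m * Re T" unfolding S1 by (simp add: mult.commute)
    then have ineq1: "Re P \<le> real m * Re T" by (simp add: mult.commute)
    have "Re T \<le> lm * Re (\<Sum>j<m. vec N (wf j) \<bullet>c vec N (wf j))"
      unfolding T_def Re_sum sum_distrib_left using blk by (intro sum_mono) auto
    also have "\<dots> = lm * (real k * nv)" unfolding sumG vv by simp
    finally have ineq2: "Re T \<le> lm * (real k * nv)" .
    have "Re P = real k * real k * ((lm - ln) * nv)" unfolding P Qvf by simp
    then have "real k * real k * ((lm - ln) * nv) \<le> real m * (lm * (real k * nv))"
      using ineq1 ineq2 m0 by (smt (verit) mult_left_mono of_nat_0_le_iff)
    then have "(real k * nv) * (real k * (lm - ln)) \<le> (real k * nv) * (real m * lm)"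
      by (simp add: algebra_simps)
    moreover have "real k * nv > 0" using k0 nv0 by simp
    ultimately show ?thesis using mult_le_cancel_left_pos[of "real k * nv"] by blast
  qed
  have fin: "1 - real m / real k \<le> ln / lm"
  proof (cases "lm > 0")
    case True
    have "1 - real m / real k = (real k * lm - real m * lm) / (real k * lm)" using True k0 by (simp add: field_simps)
    also have "\<dots> \<le> (real k * ln) / (real k * lm)" using key True k0 by (intro divide_right_mono) (auto simp: algebra_simps)
    also have "\<dots> = ln / lm" using k0 by simp
    finally show ?thesis .
  next
    case False
    have mk: "real m / real k \<ge> 1" using assms(3) k0 by simp
    show ?thesis
    proof (cases "lm = 0")
      case True
      then show ?thesis using mk by simp
    next
      case False
      then have "lm < 0" using \<open>\<not> lm > 0\<close> by simp
      then have "ln / lm \<ge> 1" using lnlm by (simp add: le_divide_eq_1_neg)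
      then show ?thesis using mk by simp
    qed
  qed
  then show ?thesis unfolding lam .
qed
end
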